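(* Let $M$ be an affine manifold (affine subspace) of $\mathbb{R}^n$ and let $f,g$ be quadratic functions on $\mathbb{R}^n$ (i.e., of the form $x^TQx+q^Tx+c$ with $Q$ real symmetric, $q\in\mathbb{R}^n$, $c\in\mathbb{R}$, no definiteness assumed). Then the set $$C:=\{(f(x),g(x)) : x\in M\}+\mathbb{R}^2_+$$ is convex. *)

theory Defs
  imports "HOL-Analysis.Analysis"
begin

definition quadratic_fun :: "real^'n^'n \<Rightarrow> real^'n \<Rightarrow> real \<Rightarrow> (real^'n \<Rightarrow> real)" where
  "quadratic_fun Q q c = (\<lambda>x. x \<bullet> (Q *v x) + q \<bullet> x + c)"

definition nonneg_orthant2 :: "(real \<times> real) set" where
  "nonneg_orthant2 = {p. 0 \<le> fst p \<and> 0 \<le> snd p}"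

definition minkowski_sum :: "'a::plus set \<Rightarrow> 'a set \<Rightarrow> 'a set" where
  "minkowski_sum A B = {a + b | a b. a \<in> A \<and> b \<in> B}"

end

theory Submission
  imports Defs
begin

lemma root_side:
  fixes a b e l D :: real
  assumes a: "a \<noteq> 0" and h: "a * (a* l^2 + b* l + e) \<le> 0"
  shows "\<exists>r. a* r^2 + b* r + e = 0 \<and> D * (r - l) \<le> 0"
proof -
  define disc where "disc = b^2 - 4*a*e"
  have "4*a*(a* l^2 + b* l + e) = (2*a* l+b)^2 - disc"
    unfolding disc_def by (simp add: power2_eq_square algebra_simps)
  moreover have "(2*a* l+b)^2 \<ge> 0" by simp
  ultimately have dp: "disc \<ge> 0" using h by linarith
  define rp where "rp = (-b + sqrt disc)/(2*a)"
  define rm where "rm = (-b - sqrt disc)/(2*a)"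
  have sq: "sqrt disc ^2 = disc" using dp by simp
  have rootp: "a*rp^2 + b*rp + e = 0"
    unfolding rp_def using a sq
    by (simp add: field_simps power2_eq_square disc_def; (simp add: algebra_simps)?)
  have rootm: "a*rm^2 + b*rm + e = 0"
    unfolding rm_def using a sq
    by (simp add: field_simps power2_eq_square disc_def; (simp add: algebra_simps)?)
  have prod: "(rp - l)*(rm - l) = (a* l^2 + b* l + e)/a"
    unfolding rp_def rm_def using a sq
    by (simp add: field_simps power2_eq_square disc_def; (simp add: algebra_simps)?)
  have "(a* l^2 + b* l + e)/a \<le> 0"
    using h a by (cases "a > 0") (auto simp: mult_le_0_iff divide_le_0_iff)
  hence p: "(D*(rp - l))*(D*(rm - l)) \<le> 0" using prod
    by (metis mult.assoc mult.left_commute mult_nonneg_nonpos zero_le_square)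
  show ?thesis
  proof (cases "D*(rp - l) \<le> 0")
    case True thus ?thesis using rootp by blast
  next
    case False
    hence "D*(rm - l) \<le> 0" using p by (smt (verit) mult_pos_pos)
    thus ?thesis using rootm by blast
  qed
qed

lemma one_dim:
  fixes a1 b1 a2 b2 l :: real
  assumes l0: "0 \<le> l" and l1: "l \<le> 1"
  shows "\<exists>s. a1* s^2 + b1* s \<le> l*(a1+b1) \<and> a2* s^2 + b2* s \<le> l*(a2+b2)"
proof -
  define D where "D = a2*b1 - a1*b2"
  define h1 where "h1 = (\<lambda>s::real. a1* s^2 + b1* s - l*(a1+b1))"
  define h2 where "h2 = (\<lambda>s::real. a2* s^2 + b2* s - l*(a2+b2))"
  have id: "\<And>s. a2 * h1 s - a1 * h2 s = D*(s - l)"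
    unfolding h1_def h2_def D_def by (simp add: algebra_simps power2_eq_square)
  have hl1: "h1 l = - (l*(1-l)*a1)" unfolding h1_def by (simp add: algebra_simps power2_eq_square)
  have hl2: "h2 l = - (l*(1-l)*a2)" unfolding h2_def by (simp add: algebra_simps power2_eq_square)
  have ll: "l*(1-l) \<ge> 0" using l0 l1 by simp
  have goal: "\<exists>s. h1 s \<le> 0 \<and> h2 s \<le> 0"
  proof (cases "a1 \<ge> 0 \<and> a2 \<ge> 0")
    case True thus ?thesis using hl1 hl2 ll
      by (metis mult_nonneg_nonneg neg_le_0_iff_le)
  next
    case F: False
    show ?thesis
    proof (cases "a2 > 0")
      case True
      hence a1: "a1 < 0" using F by auto
      have hh: "a2 * (a2* l^2 + b2* l + (- l*(a2+b2))) \<le> 0"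
        using hl2 True ll unfolding h2_def by (simp add: mult_nonneg_nonneg)
      obtain r where r: "a2* r^2 + b2* r + (- l*(a2+b2)) = 0" "D*(r-l) \<le> 0"
        using root_side[where a=a2 and b=b2 and e="- l*(a2+b2)" and l=l and D=D, OF _ hh] True by (metis less_irrefl)
      have "h2 r = 0" using r(1) unfolding h2_def by simp
      hence "a2 * h1 r \<le> 0" using id[of r] r(2) by simp
      hence "h1 r \<le> 0" using True by (simp add: mult_le_0_iff)
      thus ?thesis using \<open>h2 r = 0\<close> by (intro exI[of _ r]) simp
    next
      case a2: False
      show ?thesis
      proof (cases "a1 > 0")
        case True
        have hh: "a1 * (a1* l^2 + b1* l + (- l*(a1+b1))) \<le> 0"
          using hl1 True ll unfolding h1_def by (simp add: mult_nonneg_nonneg)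
        obtain r where r: "a1* r^2 + b1* r + (- l*(a1+b1)) = 0" "(-D)*(r-l) \<le> 0"
          using root_side[where a=a1 and b=b1 and e="- l*(a1+b1)" and l=l and D="-D", OF _ hh] True by (metis less_irrefl)
        have "h1 r = 0" using r(1) unfolding h1_def by simp
        hence "a1 * h2 r \<le> 0" using id[of r] r(2) by simp
        hence "h2 r \<le> 0" using True by (simp add: mult_le_0_iff)
        thus ?thesis using \<open>h1 r = 0\<close> by (intro exI[of _ r]) simp
      next
        case a1: False
        show ?thesis
        proof (cases "a1 < 0")
          case True
          have hh: "a1 * (a1* l^2 + b1* l + (- l*(a1+b1))) \<le> 0"
            using hl1 True ll unfolding h1_def
            by (simp add: mult_le_0_iff mult_nonneg_nonneg mult_nonneg_nonpos)
              (metis mult.commute mult.left_commute mult_nonneg_nonneg zero_le_square)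
          obtain r where r: "a1* r^2 + b1* r + (- l*(a1+b1)) = 0" "D*(r-l) \<le> 0"
            using root_side[where a=a1 and b=b1 and e="- l*(a1+b1)" and l=l and D=D, OF _ hh] True by (metis less_irrefl)
          have "h1 r = 0" using r(1) unfolding h1_def by simp
          hence "(-a1) * h2 r \<le> 0" using id[of r] r(2) by simp
          hence "h2 r \<le> 0" using True by (simp add: zero_le_mult_iff)
          thus ?thesis using \<open>h1 r = 0\<close> by (intro exI[of _ r]) simp
        next
          case False
          hence a1z: "a1 = 0" using a1 by simp
          hence a2n: "a2 < 0" using F a2 by auto
          have hh: "a2 * (a2* l^2 + b2* l + (- l*(a2+b2))) \<le> 0"
            using hl2 a2n ll unfolding h2_def
            by (simp add: mult_le_0_iff mult_nonneg_nonneg mult_nonneg_nonpos)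
              (metis mult.commute mult.left_commute mult_nonneg_nonneg zero_le_square)
          obtain r where r: "a2* r^2 + b2* r + (- l*(a2+b2)) = 0" "(-D)*(r-l) \<le> 0"
            using root_side[where a=a2 and b=b2 and e="- l*(a2+b2)" and l=l and D="-D", OF _ hh] a2n by (metis less_irrefl)
          have "h2 r = 0" using r(1) unfolding h2_def by simp
          hence "a2 * h1 r \<ge> 0" using id[of r] r(2) by simp
          hence "h1 r \<le> 0" using a2n by (simp add: mult_le_0_iff zero_le_mult_iff)
          thus ?thesis using \<open>h2 r = 0\<close> by (intro exI[of _ r]) simp
        qed
      qed
    qed
  qed
  thus ?thesis unfolding h1_def h2_def by auto
qed

lemma quad_line:
  "quadratic_fun Q q c (x + s *\<^sub>R d) =
     quadratic_fun Q q c x + (d \<bullet> (Q *v d)) * s^2 + (d \<bullet> (Q *v x) + x \<bullet> (Q *v d) + q \<bullet> d) * s"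
  unfolding quadratic_fun_def
  by (simp add: matrix_vector_right_distrib matrix_vector_mult_scaleR inner_add_left
      inner_add_right algebra_simps power2_eq_square)

theorem theorem4p1:
  fixes M :: "(real^'n) set"
    and Q1 Q2 :: "real^'n^'n" and q1 q2 :: "real^'n" and c1 c2 :: real
  assumes "affine M"
    and "transpose Q1 = Q1" and "transpose Q2 = Q2"
  shows "convex (minkowski_sum
           ((\<lambda>x. (quadratic_fun Q1 q1 c1 x, quadratic_fun Q2 q2 c2 x)) ` M)
           nonneg_orthant2)"
proof -
  let ?f = "quadratic_fun Q1 q1 c1"
  let ?g = "quadratic_fun Q2 q2 c2"
  have key: "\<exists>z\<in>M. ?f z \<le> ?f x + l * (?f y - ?f x) \<and> ?g z \<le> ?g x + l * (?g y - ?g x)"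
    if x: "x \<in> M" and y: "y \<in> M" and l: "0 \<le> l" "l \<le> 1" for x y l
  proof -
    define d where "d = y - x"
    define a1 where "a1 = d \<bullet> (Q1 *v d)"
    define b1 where "b1 = d \<bullet> (Q1 *v x) + x \<bullet> (Q1 *v d) + q1 \<bullet> d"
    define a2 where "a2 = d \<bullet> (Q2 *v d)"
    define b2 where "b2 = d \<bullet> (Q2 *v x) + x \<bullet> (Q2 *v d) + q2 \<bullet> d"
    have f: "\<And>s. ?f (x + s *\<^sub>R d) = ?f x + a1 * s^2 + b1 * s"
      unfolding a1_def b1_def by (rule quad_line)
    have g: "\<And>s. ?g (x + s *\<^sub>R d) = ?g x + a2 * s^2 + b2 * s"
      unfolding a2_def b2_def by (rule quad_line)
    have yy: "y = x + 1 *\<^sub>R d" unfolding d_def by simp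
    have fy: "?f y = ?f x + a1 + b1" using f[of 1] yy by simp
    have gy: "?g y = ?g x + a2 + b2" using g[of 1] yy by simp
    obtain s where s: "a1* s^2 + b1* s \<le> l*(a1+b1)" "a2* s^2 + b2* s \<le> l*(a2+b2)"
      using one_dim[OF l] by blast
    have zM: "x + s *\<^sub>R d \<in> M"
    proof -
      have "(1 - s) *\<^sub>R x + s *\<^sub>R y \<in> M" using assms(1) x y unfolding affine_alt by blast
      moreover have "(1 - s) *\<^sub>R x + s *\<^sub>R y = x + s *\<^sub>R d" unfolding d_def
        by (simp add: algebra_simps)
      ultimately show ?thesis by simp
    qed
    show ?thesis
      by (rule bexI[OF _ zM]) (use s f g fy gy in auto)
  qed
  show ?thesis
    unfolding convex_def
  proof (intro ballI allI impI)
    fix P R :: "real \<times> real" and u v :: real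
    assume P: "P \<in> minkowski_sum ((\<lambda>x. (?f x, ?g x)) ` M) nonneg_orthant2"
      and R: "R \<in> minkowski_sum ((\<lambda>x. (?f x, ?g x)) ` M) nonneg_orthant2"
      and u: "0 \<le> u" and v: "0 \<le> v" and uv: "u + v = 1"
    obtain x p where x: "x \<in> M" and p: "0 \<le> fst p" "0 \<le> snd p"
      and Pe: "P = (?f x, ?g x) + p"
      using P unfolding minkowski_sum_def nonneg_orthant2_def by auto
    obtain y r where y: "y \<in> M" and r: "0 \<le> fst r" "0 \<le> snd r"
      and Re: "R = (?f y, ?g y) + r"
      using R unfolding minkowski_sum_def nonneg_orthant2_def by auto
    have v1: "v \<le> 1" using u uv by simp
    obtain z where z: "z \<in> M" "?f z \<le> ?f x + v * (?f y - ?f x)"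
      "?g z \<le> ?g x + v * (?g y - ?g x)"
      using key[OF x y v v1] by blast
    define w where "w = u *\<^sub>R P + v *\<^sub>R R - (?f z, ?g z)"
    have uu: "u = 1 - v" using uv by simp
    have w1: "0 \<le> fst w"
    proof -
      have "fst w = (1-v) * ?f x + v * ?f y - ?f z + ((1-v) * fst p + v * fst r)"
        unfolding w_def Pe Re uu by (simp add: algebra_simps)
      moreover have "(1-v) * ?f x + v * ?f y - ?f z \<ge> 0" using z(2) by (simp add: algebra_simps)
      moreover have "(1-v) * fst p + v * fst r \<ge> 0" using p r v v1 by simp
      ultimately show ?thesis by linarith
    qed
    have w2: "0 \<le> snd w"
    proof -
      have "snd w = (1-v) * ?g x + v * ?g y - ?g z + ((1-v) * snd p + v * snd r)"
        unfolding w_def Pe Re uu by (simp add: algebra_simps)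
      moreover have "(1-v) * ?g x + v * ?g y - ?g z \<ge> 0" using z(3) by (simp add: algebra_simps)
      moreover have "(1-v) * snd p + v * snd r \<ge> 0" using p r v v1 by simp
      ultimately show ?thesis by linarith
    qed
    have "u *\<^sub>R P + v *\<^sub>R R = (?f z, ?g z) + w" unfolding w_def by simp
    thus "u *\<^sub>R P + v *\<^sub>R R \<in> minkowski_sum ((\<lambda>x. (?f x, ?g x)) ` M) nonneg_orthant2"
      unfolding minkowski_sum_def nonneg_orthant2_def using z(1) w1 w2 by blast
  qed
qed

end
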